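(* Let $Y'\subseteq Y$ and $Z'\subseteq Z$ and let $f\in\mathbb{F}[Y',Z']$. Let $a=\min\{|Y'|,|Z'|\}$. Then $\mathrm{maxrank}(M_f)\le 2^a$.
   Context: $\mathbb{F}$ is a field, $Y=\{y_1,\dots,y_m\}$ and $Z=\{z_1,\dots,z_m\}$ are disjoint sets of variables. For $f\in\mathbb{F}[Y,Z]$, the polynomial coefficient matrix $M_f$ is the $2^m\times 2^m$ matrix with entries in $\mathbb{F}[Y,Z]$, rows indexed by monic multilinear monomials $p$ in $Y$ and columns by monic multilinear monomials $q$ in $Z$, where $M_f(p,q)=G$ if and only if $f$ can be uniquely written as $f=pq\,G+Q$ with $G,Q\in\mathbb{F}[Y,Z]$ such that $G$ contains no variable other than those present in $p$ and $q$, and $Q$ has no monomial which is divisible by $pq$ and contains only variables present in $p$ and $q$. For $S:Y\cup Z\to\mathbb{F}$, $M_f|_S$ is obtained by evaluating each entry at $S$, and $\mathrm{maxrank}(M_f)=\max_S\mathrm{rank}(M_f|_S)$. *)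

theory Defs
  imports "HOL-Library.Poly_Mapping" "Jordan_Normal_Form.DL_Rank"
begin

(* Variables: Inl i = y_i, Inr i = z_i  (indices i < m are used). *)
type_synonym var = "nat + nat"

type_synonym 'a mpoly = "(var \<Rightarrow>\<^sub>0 nat) \<Rightarrow>\<^sub>0 'a"

definition mpoly_vars :: "'a::zero mpoly \<Rightarrow> var set" where
  "mpoly_vars f = \<Union> (Poly_Mapping.keys ` Poly_Mapping.keys f)"

definition ml_mono :: "nat set \<Rightarrow> nat set \<Rightarrow> (var \<Rightarrow>\<^sub>0 nat)" where
  "ml_mono P Q = (\<Sum>i\<in>P. Poly_Mapping.single (Inl i) 1) + (\<Sum>j\<in>Q. Poly_Mapping.single (Inr j) 1)"

(* entry M_f(p,q): the unique G with f = p q G + R, G only in the variables of p q,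
   R without monomials divisible by p q using only variables of p q *)
definition coeff_entry :: "'a::field mpoly \<Rightarrow> nat set \<Rightarrow> nat set \<Rightarrow> 'a mpoly" where
  "coeff_entry f P Q = (THE G.
     mpoly_vars G \<subseteq> Poly_Mapping.keys (ml_mono P Q) \<and>
     (\<exists>R. f = Poly_Mapping.single (ml_mono P Q) 1 * G + R \<and>
          (\<forall>\<nu>\<in>Poly_Mapping.keys R. \<not> ((\<exists>\<rho>. \<nu> = ml_mono P Q + \<rho>) \<and> Poly_Mapping.keys \<nu> \<subseteq> Poly_Mapping.keys (ml_mono P Q)))))"

definition mpoly_eval :: "(var \<Rightarrow> 'a::field) \<Rightarrow> 'a mpoly \<Rightarrow> 'a" where
  "mpoly_eval S f = (\<Sum>\<mu>\<in>Poly_Mapping.keys f. Poly_Mapping.lookup f \<mu> * (\<Prod>v\<in>Poly_Mapping.keys \<mu>. S v ^ Poly_Mapping.lookup \<mu> v))"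

(* enumeration of the subsets of {0..<m} (equivalently of the monic multilinear
   monomials in m variables) by the numbers 0..<2^m via binary expansion *)
definition idx_set :: "nat \<Rightarrow> nat \<Rightarrow> nat set" where
  "idx_set m i = {j. j < m \<and> bit i j}"

definition coeff_mat_eval :: "nat \<Rightarrow> 'a::field mpoly \<Rightarrow> (var \<Rightarrow> 'a) \<Rightarrow> 'a mat" where
  "coeff_mat_eval m f S =
     mat (2^m) (2^m) (\<lambda>(i, j). mpoly_eval S (coeff_entry f (idx_set m i) (idx_set m j)))"

definition maxrank :: "nat \<Rightarrow> 'a::field mpoly \<Rightarrow> nat" where
  "maxrank m f = Max {vec_space.rank (2^m) (coeff_mat_eval m f S) | S. True}"

end

theory Submission
  imports Defs
begin

lemma rank_rows_le:
  fixes A :: "'a::field mat"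
  assumes "finite I" "A \<in> carrier_mat n nc"
    and "\<And>r c. r < n \<Longrightarrow> c < nc \<Longrightarrow> r \<notin> I \<Longrightarrow> A $$ (r,c) = 0"
  shows "vec_space.rank n A \<le> card I"
  using assms
proof (induction I arbitrary: A rule: finite_induct)
  case empty
  then have "A = 0\<^sub>m n nc" by (intro eq_matI) auto
  then show ?case using vec_space.rank_0I by simp
next
  case (insert i I)
  define B where "B = mat n nc (\<lambda>(r,c). if r = i then A $$ (r,c) else 0)"
  define C where "C = mat n nc (\<lambda>(r,c). if r = i then 0 else A $$ (r,c))"
  have BC: "B \<in> carrier_mat n nc" "C \<in> carrier_mat n nc" unfolding B_def C_def by auto
  have "A = B + C" using insert.prems(1) unfolding B_def C_def by (intro eq_matI) auto
  have rB: "vec_space.rank n B \<le> 1"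
    by (rule vec_space.rank_le_1_product_entries[OF BC(1), of "\<lambda>r. if r = i then 1 else 0" "\<lambda>c. A $$ (i,c)"])
       (auto simp: B_def)
  have rC: "vec_space.rank n C \<le> card I"
    using insert.IH[OF BC(2)] insert.prems unfolding C_def by auto
  have "vec_space.rank n A \<le> vec_space.rank n B + vec_space.rank n C"
    using vec_space.rank_subadditive[OF BC] \<open>A = B + C\<close> by simp
  then show ?case using rB rC insert.hyps by simp
qed

lemma rank_cols_le:
  fixes A :: "'a::field mat"
  assumes "finite J" "A \<in> carrier_mat n nc"
    and "\<And>r c. r < n \<Longrightarrow> c < nc \<Longrightarrow> c \<notin> J \<Longrightarrow> A $$ (r,c) = 0"
  shows "vec_space.rank n A \<le> card J"
  using assms
proof (induction J arbitrary: A rule: finite_induct)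
  case empty
  then have "A = 0\<^sub>m n nc" by (intro eq_matI) auto
  then show ?case using vec_space.rank_0I by simp
next
  case (insert i I)
  define B where "B = mat n nc (\<lambda>(r,c). if c = i then A $$ (r,c) else 0)"
  define C where "C = mat n nc (\<lambda>(r,c). if c = i then 0 else A $$ (r,c))"
  have BC: "B \<in> carrier_mat n nc" "C \<in> carrier_mat n nc" unfolding B_def C_def by auto
  have "A = B + C" using insert.prems(1) unfolding B_def C_def by (intro eq_matI) auto
  have rB: "vec_space.rank n B \<le> 1"
    by (rule vec_space.rank_le_1_product_entries[OF BC(1), of "\<lambda>r. A $$ (r,i)" "\<lambda>c. if c = i then 1 else 0"])
       (auto simp: B_def)
  have rC: "vec_space.rank n C \<le> card I"
    using insert.IH[OF BC(2)] insert.prems unfolding C_def by auto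
  have "vec_space.rank n A \<le> vec_space.rank n B + vec_space.rank n C"
    using vec_space.rank_subadditive[OF BC] \<open>A = B + C\<close> by simp
  then show ?case using rB rC insert.hyps by simp
qed

lemma lookup_single_mult:
  fixes G :: "'a::field mpoly"
  shows "Poly_Mapping.lookup (Poly_Mapping.single mm 1 * G) (mm + \<mu>) = Poly_Mapping.lookup G \<mu>"
  by (simp add: lookup_mult lookup_single when_mult)

lemma lookup_ml_mono_Inl:
  assumes "finite P"
  shows "Poly_Mapping.lookup (ml_mono P Q) (Inl i) = (if i \<in> P then 1 else 0)"
  using assms by (simp add: ml_mono_def lookup_add lookup_sum lookup_single when_def)

lemma lookup_ml_mono_Inr:
  assumes "finite Q"
  shows "Poly_Mapping.lookup (ml_mono P Q) (Inr i) = (if i \<in> Q then 1 else 0)"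
  using assms by (simp add: ml_mono_def lookup_add lookup_sum lookup_single when_def)

lemma coeff_entry_zero:
  fixes f :: "'a::field mpoly"
  assumes x: "x \<in> Poly_Mapping.keys (ml_mono P Q)" "x \<notin> mpoly_vars f"
  shows "coeff_entry f P Q = 0"
proof -
  let ?m = "ml_mono P Q"
  have nokey: "x \<in> Poly_Mapping.keys (?m + \<rho>)" for \<rho>
    using x(1) by (simp add: in_keys_iff lookup_add)
  have fz: "Poly_Mapping.lookup f (?m + \<rho>) = 0" for \<rho>
  proof (rule ccontr)
    assume "Poly_Mapping.lookup f (?m + \<rho>) \<noteq> 0"
    then have "?m + \<rho> \<in> Poly_Mapping.keys f" by (simp add: in_keys_iff)
    then have "x \<in> mpoly_vars f" using nokey unfolding mpoly_vars_def by blast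
    then show False using x(2) by simp
  qed
  show ?thesis unfolding coeff_entry_def
  proof (rule the_equality)
    show "mpoly_vars 0 \<subseteq> Poly_Mapping.keys ?m \<and>
     (\<exists>R. f = Poly_Mapping.single ?m 1 * 0 + R \<and>
          (\<forall>\<nu>\<in>Poly_Mapping.keys R. \<not> ((\<exists>\<rho>. \<nu> = ?m + \<rho>) \<and> Poly_Mapping.keys \<nu> \<subseteq> Poly_Mapping.keys ?m)))"
      using fz by (auto simp: mpoly_vars_def in_keys_iff)
  next
    fix G :: "'a mpoly"
    assume "mpoly_vars G \<subseteq> Poly_Mapping.keys ?m \<and>
     (\<exists>R. f = Poly_Mapping.single ?m 1 * G + R \<and>
          (\<forall>\<nu>\<in>Poly_Mapping.keys R. \<not> ((\<exists>\<rho>. \<nu> = ?m + \<rho>) \<and> Poly_Mapping.keys \<nu> \<subseteq> Poly_Mapping.keys ?m)))"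
    then obtain R where vG: "mpoly_vars G \<subseteq> Poly_Mapping.keys ?m"
      and fR: "f = Poly_Mapping.single ?m 1 * G + R"
      and R: "\<forall>\<nu>\<in>Poly_Mapping.keys R. \<not> ((\<exists>\<rho>. \<nu> = ?m + \<rho>) \<and> Poly_Mapping.keys \<nu> \<subseteq> Poly_Mapping.keys ?m)"
      by blast
    have "Poly_Mapping.keys G = {}"
    proof (rule ccontr)
      assume "Poly_Mapping.keys G \<noteq> {}"
      then obtain \<mu> where mu: "\<mu> \<in> Poly_Mapping.keys G" by blast
      have "Poly_Mapping.keys \<mu> \<subseteq> Poly_Mapping.keys ?m"
        using vG mu unfolding mpoly_vars_def by blast
      then have "Poly_Mapping.keys (?m + \<mu>) \<subseteq> Poly_Mapping.keys ?m"
        using keys_add[of ?m \<mu>] by blast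
      then have "?m + \<mu> \<notin> Poly_Mapping.keys R" using R by blast
      then have "Poly_Mapping.lookup R (?m + \<mu>) = 0" by (simp add: in_keys_iff)
      then have "Poly_Mapping.lookup f (?m + \<mu>) = Poly_Mapping.lookup G \<mu>"
        using fR lookup_single_mult[of ?m G \<mu>] by (simp add: lookup_add)
      then show False using fz mu by (simp add: in_keys_iff)
    qed
    then show "G = 0" by simp
  qed
qed

lemma idx_set_inj: "inj_on (idx_set m) {..<2^m}"
proof (rule inj_onI)
  fix i j assume i: "i \<in> {..<(2::nat)^m}" and j: "j \<in> {..<(2::nat)^m}" and e: "idx_set m i = idx_set m j"
  have "take_bit m i = i" "take_bit m j = j" using i j by (auto simp: take_bit_nat_eq_self_iff)
  have "bit i n = bit j n" for n
  proof (cases "n < m")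
    case True then show ?thesis using e unfolding idx_set_def by blast
  next
    case False
    then show ?thesis using \<open>take_bit m i = i\<close> \<open>take_bit m j = j\<close>
      by (metis bit_take_bit_iff)
  qed
  then show "i = j" by (simp add: bit_eq_iff)
qed

lemma idx_set_sub: "idx_set m i \<subseteq> {..<m}"
  unfolding idx_set_def by auto

lemma card_idx_le:
  assumes "A \<subseteq> {..<m}"
  shows "card {i \<in> {..<(2::nat)^m}. idx_set m i \<subseteq> A} \<le> 2 ^ card A"
proof -
  have fA: "finite A" using assms finite_subset by blast
  have "card {i \<in> {..<(2::nat)^m}. idx_set m i \<subseteq> A} = card (idx_set m ` {i \<in> {..<(2::nat)^m}. idx_set m i \<subseteq> A})"
    by (rule card_image[symmetric]) (rule inj_on_subset[OF idx_set_inj], blast)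
  also have "\<dots> \<le> card (Pow A)"
    by (rule card_mono) (use fA in auto)
  also have "\<dots> = 2 ^ card A" using fA by (simp add: card_Pow)
  finally show ?thesis .
qed

lemma mpoly_eval_zero [simp]: "mpoly_eval S 0 = 0"
  by (simp add: mpoly_eval_def)

theorem proposition1:
  fixes m :: nat and Y' Z' :: "nat set" and f :: "'a::field mpoly"
  assumes "Y' \<subseteq> {..<m}" and "Z' \<subseteq> {..<m}"
    and "mpoly_vars f \<subseteq> Inl ` Y' \<union> Inr ` Z'"
  shows "maxrank m f \<le> 2 ^ min (card Y') (card Z')"
proof -
  have rowz: "coeff_entry f (idx_set m i) Q = 0" if ni: "\<not> idx_set m i \<subseteq> Y'" for i Q
  proof -
    obtain k where k: "k \<in> idx_set m i" "k \<notin> Y'" using ni by blast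
    have fin: "finite (idx_set m i)" using idx_set_sub finite_subset by blast
    show ?thesis
    proof (rule coeff_entry_zero)
      show "Inl k \<in> Poly_Mapping.keys (ml_mono (idx_set m i) Q)"
        using k fin by (simp add: in_keys_iff lookup_ml_mono_Inl)
      show "Inl k \<notin> mpoly_vars f" using assms(3) k by auto
    qed
  qed
  have colz: "coeff_entry f P (idx_set m j) = 0" if nj: "\<not> idx_set m j \<subseteq> Z'" for j P
  proof -
    obtain k where k: "k \<in> idx_set m j" "k \<notin> Z'" using nj by blast
    have fin: "finite (idx_set m j)" using idx_set_sub finite_subset by blast
    show ?thesis
    proof (rule coeff_entry_zero)
      show "Inr k \<in> Poly_Mapping.keys (ml_mono P (idx_set m j))"
        using k fin by (simp add: in_keys_iff lookup_ml_mono_Inr)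
      show "Inr k \<notin> mpoly_vars f" using assms(3) k by auto
    qed
  qed
  have bound: "vec_space.rank (2^m) (coeff_mat_eval m f S) \<le> 2 ^ min (card Y') (card Z')" for S
  proof -
    let ?A = "coeff_mat_eval m f S"
    have car: "?A \<in> carrier_mat (2^m) (2^m)" unfolding coeff_mat_eval_def by auto
    have r1: "vec_space.rank (2^m) ?A \<le> card {i \<in> {..<(2::nat)^m}. idx_set m i \<subseteq> Y'}"
      by (rule rank_rows_le[OF _ car]) (auto simp: coeff_mat_eval_def rowz)
    have r2: "vec_space.rank (2^m) ?A \<le> card {i \<in> {..<(2::nat)^m}. idx_set m i \<subseteq> Z'}"
      by (rule rank_cols_le[OF _ car]) (auto simp: coeff_mat_eval_def colz)
    have "vec_space.rank (2^m) ?A \<le> 2 ^ card Y'" using r1 card_idx_le[OF assms(1)] by linarith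
    moreover have "vec_space.rank (2^m) ?A \<le> 2 ^ card Z'" using r2 card_idx_le[OF assms(2)] by linarith
    ultimately show ?thesis by (simp add: min_def)
  qed
  let ?X = "{vec_space.rank (2^m) (coeff_mat_eval m f S) | S. True}"
  have fin: "finite ?X"
    by (rule finite_subset[of _ "{..2 ^ min (card Y') (card Z')}"]) (use bound in auto)
  have ne: "?X \<noteq> {}" by blast
  show ?thesis unfolding maxrank_def using fin ne bound by (subst Max_le_iff) auto
qed

end
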